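(* Let $\epsilon:B\to A$ (with section $j$) be a local augmentation; regard $A\subset B$ via $j$, let $I=\ker(\epsilon)$, and let $B^\bullet$ denote the group of units of $B$. For a subset $S\subset B\times B$ such that $1+ba\in B^\bullet$ for all $(a,b)\in S$, put $$C(S)=\epsilon^{-1}(1)\cap\langle(1+ab)(1+ba)^{-1}\mid(a,b)\in S\rangle .$$ Then: 1. $C(\{(a,b):\epsilon(a)=0\})=C(\{(a,b):\epsilon(ab)=\epsilon(ba)=0\})=C(\{(a,b):\epsilon(ba)=0\})=C(\{(a,b):1+ba\in B^\bullet\})$. 2. $[B^\bullet,B^\bullet]\cap\epsilon^{-1}(1)=C(\{(a,b):b\in B^\bullet,\ 1+ba\in B^\bullet\})$. 3. $[\epsilon^{-1}(1),\epsilon^{-1}(1)]=C(\{(a,b):\epsilon(a)=0,\ \epsilon(b)=\zeta\})$ for any $\zeta\in A$ which commutes with every element of $I$. In particular, $$[\epsilon^{-1}(1),\epsilon^{-1}(1)]\subset[B^\bullet,B^\bullet]\cap\epsilon^{-1}(1)\subset C:=C(\{(a,b):\epsilon(ab)=\epsilon(ba)=0\}),$$ and $C$ is a normal subgroup of $\epsilon^{-1}(1)$ with abelian quotient.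
   Context: Rings are associative with $1$. An augmentation is a pair of ring homomorphisms $\epsilon:B\to A$, $j:A\to B$ with $\epsilon j=\mathrm{id}_A$; it is a local augmentation if every square matrix $\alpha$ over $B$ with $\epsilon(\alpha)$ invertible is itself invertible. $\langle\cdot\rangle$ denotes the subgroup of $B^\bullet$ generated, and $[G,G]$ the commutator subgroup. (In each listed set $S$ the condition $1+ba\in B^\bullet$ holds automatically by locality, or is imposed.) *)

theory Defs
  imports "HOL-Algebra.Algebra"
begin

definition is_ring_hom :: "('b::ring_1 \<Rightarrow> 'a::ring_1) \<Rightarrow> bool" where
  "is_ring_hom f \<longleftrightarrow> (\<forall>x y. f (x + y) = f x + f y) \<and> (\<forall>x y. f (x * y) = f x * f y) \<and> f 1 = 1"

text \<open>Square n x n matrices over a ring are encoded as functions nat => nat => 'a,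
  only the entries with indices below n matter.\<close>
definition sq_mat_invertible :: "nat \<Rightarrow> (nat \<Rightarrow> nat \<Rightarrow> 'a::ring_1) \<Rightarrow> bool" where
  "sq_mat_invertible n M \<longleftrightarrow> (\<exists>N :: nat \<Rightarrow> nat \<Rightarrow> 'a.
     (\<forall>i<n. \<forall>k<n. (\<Sum>l<n. M i l * N l k) = (if i = k then 1 else 0)) \<and>
     (\<forall>i<n. \<forall>k<n. (\<Sum>l<n. N i l * M l k) = (if i = k then 1 else 0)))"

definition augmentation :: "('b::ring_1 \<Rightarrow> 'a::ring_1) \<Rightarrow> ('a \<Rightarrow> 'b) \<Rightarrow> bool" where
  "augmentation eps j \<longleftrightarrow> is_ring_hom eps \<and> is_ring_hom j \<and> (\<forall>x. eps (j x) = x)"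

definition local_augmentation :: "('b::ring_1 \<Rightarrow> 'a::ring_1) \<Rightarrow> ('a \<Rightarrow> 'b) \<Rightarrow> bool" where
  "local_augmentation eps j \<longleftrightarrow> augmentation eps j \<and>
     (\<forall>n (M :: nat \<Rightarrow> nat \<Rightarrow> 'b). sq_mat_invertible n (\<lambda>i k. eps (M i k)) \<longrightarrow> sq_mat_invertible n M)"

definition mult_monoid :: "'b::ring_1 monoid" where
  "mult_monoid = \<lparr>carrier = UNIV, monoid.mult = (*), one = 1\<rparr>"

definition units_grp :: "'b::ring_1 monoid" where
  "units_grp = units_of mult_monoid"

definition C_set :: "('b::ring_1 \<Rightarrow> 'a::ring_1) \<Rightarrow> ('b \<times> 'b) set \<Rightarrow> 'b set" where
  "C_set eps S = {x. eps x = 1} \<inter>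
     generate units_grp {(1 + a * b) \<otimes>\<^bsub>units_grp\<^esub> inv\<^bsub>units_grp\<^esub> (1 + b * a) | a b. (a, b) \<in> S}"

end

theory Submission
  imports Defs
begin

lemma monoid_mm: "monoid (mult_monoid :: 'b::ring_1 monoid)"
  by (unfold_locales) (auto simp: mult_monoid_def mult.assoc)

lemma UG_group: "group (units_grp :: 'b::ring_1 monoid)"
  unfolding units_grp_def by (rule monoid.units_group[OF monoid_mm])

lemma UG_carrier: "carrier (units_grp :: 'b::ring_1 monoid) = {x. \<exists>y. x * y = 1 \<and> y * x = 1}"
  by (auto simp: units_grp_def units_of_carrier Units_def mult_monoid_def)

lemma UG_mult [simp]: "x \<otimes>\<^bsub>(units_grp :: 'b::ring_1 monoid)\<^esub> y = x * y"
  by (simp add: units_grp_def units_of_mult mult_monoid_def)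

lemma UG_one [simp]: "\<one>\<^bsub>(units_grp :: 'b::ring_1 monoid)\<^esub> = 1"
  by (simp add: units_grp_def units_of_one mult_monoid_def)

abbreviation iv :: "'b::ring_1 \<Rightarrow> 'b" where "iv x \<equiv> inv\<^bsub>(units_grp :: 'b monoid)\<^esub> x"

lemma iv_props:
  fixes x :: "'b::ring_1"
  assumes "x \<in> carrier units_grp"
  shows "x * iv x = 1" "iv x * x = 1" "iv x \<in> carrier units_grp"
  using group.r_inv[OF UG_group assms] group.l_inv[OF UG_group assms]
    group.inv_closed[OF UG_group assms] by auto

lemma iv_eq:
  fixes x :: "'b::ring_1"
  assumes "x * y = 1" "y * x = 1"
  shows "iv x = y"
proof -
  have x: "x \<in> carrier units_grp" "y \<in> carrier units_grp" using assms by (auto simp: UG_carrier)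
  show ?thesis using group.inv_equality[OF UG_group, of y x] x assms by auto
qed

lemma UG_I: "(x::'b::ring_1) * y = 1 \<Longrightarrow> y * x = 1 \<Longrightarrow> x \<in> carrier units_grp"
  by (auto simp: UG_carrier)

lemma UG_mult_closed: "(x::'b::ring_1) \<in> carrier units_grp \<Longrightarrow> y \<in> carrier units_grp \<Longrightarrow> x * y \<in> carrier units_grp"
  using monoid.m_closed[OF group.is_monoid[OF UG_group]] by fastforce

lemma UG_one_in [simp]: "(1::'b::ring_1) \<in> carrier units_grp"
  using UG_I[of 1 1] by simp

lemma iv_one [simp]: "iv (1::'b::ring_1) = 1"
  by (rule iv_eq) auto

lemma iv_iv: "(x::'b::ring_1) \<in> carrier units_grp \<Longrightarrow> iv (iv x) = x"
  by (rule iv_eq) (auto simp: iv_props)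

lemma iv_mult: "(x::'b::ring_1) \<in> carrier units_grp \<Longrightarrow> y \<in> carrier units_grp \<Longrightarrow> iv (x * y) = iv y * iv x"
proof (rule iv_eq)
  assume x: "x \<in> carrier units_grp" and y: "y \<in> carrier units_grp"
  have "x * y * (iv y * iv x) = x * (y * iv y) * iv x" by (simp add: mult.assoc)
  then show "x * y * (iv y * iv x) = 1" using x y by (simp add: iv_props)
  have "iv y * iv x * (x * y) = iv y * (iv x * x) * y" by (simp add: mult.assoc)
  then show "iv y * iv x * (x * y) = 1" using x y by (simp add: iv_props)
qed

lemma iv_cancel [simp]:
  fixes x :: "'b::ring_1"
  assumes "x \<in> carrier units_grp"
  shows "x * (iv x * y) = y" "iv x * (x * y) = y" "y * x * iv x = y" "y * iv x * x = y"
  using assms by (simp_all add: mult.assoc[symmetric] iv_props) (simp_all add: mult.assoc iv_props)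

lemma jacobson:
  fixes a b :: "'b::ring_1"
  assumes "1 + b * a \<in> carrier units_grp"
  shows "1 + a * b \<in> carrier units_grp"
proof (rule UG_I)
  let ?v = "iv (1 + b * a)"
  have "(1 + a * b) * (1 - a * ?v * b) = 1 + a * b - a * ((1 + b * a) * ?v) * b"
    by (simp add: algebra_simps)
  then show "(1 + a * b) * (1 - a * ?v * b) = 1" using iv_props[OF assms] by simp
  have "(1 - a * ?v * b) * (1 + a * b) = 1 + a * b - a * (?v * (1 + b * a)) * b"
    by (simp add: algebra_simps)
  then show "(1 - a * ?v * b) * (1 + a * b) = 1" using iv_props[OF assms] by simp
qed

definition w :: "'b::ring_1 \<Rightarrow> 'b \<Rightarrow> 'b" where "w a b = (1 + a * b) * iv (1 + b * a)"

lemma w_unit: "1 + b * a \<in> carrier units_grp \<Longrightarrow> w a b \<in> carrier units_grp"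
  unfolding w_def using jacobson iv_props(3) UG_mult_closed by blast

lemma w_inv: "1 + b * a \<in> carrier units_grp \<Longrightarrow> iv (w a b) = w b a"
  unfolding w_def by (simp add: iv_mult jacobson iv_props iv_iv)

lemma w_comm: "1 + b * a \<in> carrier units_grp \<Longrightarrow> a * b = b * a \<Longrightarrow> w a b = 1"
  unfolding w_def by (simp add: iv_props)

lemma w_conj:
  fixes u a b :: "'b::ring_1"
  assumes u: "u \<in> carrier units_grp" and ab: "1 + b * a \<in> carrier units_grp"
  shows "u * w a b * iv u = w (u * a * iv u) (u * b * iv u)"
proof -
  have p1: "(u * a * iv u) * (u * b * iv u) = u * (a * b) * iv u"
    using u by (simp add: mult.assoc)
  have p2: "(u * b * iv u) * (u * a * iv u) = u * (b * a) * iv u"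
    using u by (simp add: mult.assoc)
  have e1: "1 + (u * a * iv u) * (u * b * iv u) = u * (1 + a * b) * iv u"
    unfolding p1 using u by (simp add: algebra_simps iv_props)
  have e2: "1 + (u * b * iv u) * (u * a * iv u) = u * (1 + b * a) * iv u"
    unfolding p2 using u by (simp add: algebra_simps iv_props)
  have "iv (u * (1 + b * a) * iv u) = u * iv (1 + b * a) * iv u"
    using u ab by (simp add: iv_mult iv_props iv_iv UG_mult_closed mult.assoc)
  then show ?thesis unfolding w_def e1 e2 using u by (simp add: mult.assoc)
qed

lemma w_add:
  fixes x y c :: "'b::ring_1"
  assumes "1 + x * y \<in> carrier units_grp" "1 + y * x \<in> carrier units_grp"
    "1 + c * y \<in> carrier units_grp" "1 + y * c \<in> carrier units_grp"
  shows "w (x + (1 + x * y) * c) y = (1 + x * y) * w c y * iv (1 + x * y) * w x y"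
proof -
  have e1: "1 + (x + (1 + x * y) * c) * y = (1 + x * y) * (1 + c * y)"
    by (simp add: algebra_simps)
  have e2: "1 + y * (x + (1 + x * y) * c) = (1 + y * x) * (1 + y * c)"
    by (simp add: algebra_simps)
  show ?thesis unfolding w_def e1 e2 using assms
    by (simp add: iv_mult mult.assoc)
qed

lemma commutator_w:
  fixes u v :: "'b::ring_1"
  assumes "u \<in> carrier units_grp" "v \<in> carrier units_grp"
  shows "u * v * iv u * iv v = w (u * (v - 1)) (iv u)"
proof -
  have e1: "1 + u * (v - 1) * iv u = u * v * iv u" using assms by (simp add: algebra_simps iv_props)
  have e2: "1 + iv u * (u * (v - 1)) = v" using assms by (simp add: algebra_simps iv_props)
  show ?thesis unfolding w_def e1 e2 using assms by (simp add: iv_props)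
qed

lemma w_commutator:
  fixes a b :: "'b::ring_1"
  assumes "b \<in> carrier units_grp" "1 + b * a \<in> carrier units_grp"
  shows "w a b = iv b * (1 + b * a) * iv (iv b) * iv (1 + b * a)"
proof -
  have "iv b * (1 + b * a) * b = 1 + a * b" using assms by (simp add: algebra_simps iv_props)
  then show ?thesis unfolding w_def using assms by (simp add: iv_iv iv_props)
qed

lemma (in group) generate_conj_closed:
  assumes Xs: "Xs \<subseteq> carrier G" and g: "g \<in> carrier G"
    and cl: "\<And>x. x \<in> Xs \<Longrightarrow> g \<otimes> x \<otimes> inv g \<in> Xs" and h: "h \<in> generate G Xs"
  shows "g \<otimes> h \<otimes> inv g \<in> generate G Xs"
  using h
proof induction
  case one
  then show ?case using g by (simp add: generate.one)
next
  case (incl h)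
  then show ?case using cl by (simp add: generate.incl)
next
  case (inv h)
  have hc: "h \<in> carrier G" using inv Xs by auto
  have "g \<otimes> inv h \<otimes> inv g = inv (g \<otimes> h \<otimes> inv g)"
    using g hc by (simp add: inv_mult_group m_assoc)
  then show ?case using cl[OF inv] generate.inv by metis
next
  case (eng h1 h2)
  have c: "h1 \<in> carrier G" "h2 \<in> carrier G" using eng generate_in_carrier[OF Xs] by auto
  have aux: "g \<otimes> h1 \<otimes> inv g \<otimes> g = g \<otimes> h1" using g c by (simp add: m_assoc)
  have "(g \<otimes> h1 \<otimes> inv g) \<otimes> (g \<otimes> h2 \<otimes> inv g) = g \<otimes> h1 \<otimes> (inv g \<otimes> g) \<otimes> h2 \<otimes> inv g"
    using g c by (simp add: m_assoc[symmetric] aux)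
  also have "\<dots> = g \<otimes> (h1 \<otimes> h2) \<otimes> inv g"
    using g c by (simp add: m_assoc)
  finally have "g \<otimes> (h1 \<otimes> h2) \<otimes> inv g = (g \<otimes> h1 \<otimes> inv g) \<otimes> (g \<otimes> h2 \<otimes> inv g)" by simp
  then show ?case using eng generate.eng by metis
qed

locale la =
  fixes eps :: "'b::ring_1 \<Rightarrow> 'a::ring_1" and j :: "'a \<Rightarrow> 'b"
  assumes la: "local_augmentation eps j"
begin

lemma hom: "is_ring_hom eps" "is_ring_hom j" "\<And>x. eps (j x) = x"
  using la unfolding local_augmentation_def augmentation_def by auto

lemma eps_add [simp]: "eps (x + y) = eps x + eps y" and eps_mult [simp]: "eps (x * y) = eps x * eps y"
  and eps_one [simp]: "eps 1 = 1" and j_add [simp]: "j (u + v) = j u + j v"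
  and j_mult [simp]: "j (u * v) = j u * j v" and j_one [simp]: "j 1 = 1" and eps_j [simp]: "eps (j u) = u"
  using hom unfolding is_ring_hom_def by auto

lemma eps_zero [simp]: "eps 0 = 0"
  using eps_add[of 0 0] by simp

lemma eps_minus [simp]: "eps (- x) = - eps x"
proof -
  have "eps x + eps (- x) = 0" using eps_add[of x "- x"] by simp
  then show ?thesis by (metis add.inverse_unique)
qed

lemma eps_diff [simp]: "eps (x - y) = eps x - eps y"
  using eps_add[of x "- y"] by simp

lemma unit_lift:
  assumes "eps x \<in> carrier units_grp"
  shows "x \<in> carrier units_grp"
proof -
  obtain y where y: "eps x * y = 1" "y * eps x = 1" using assms by (auto simp: UG_carrier)
  have "sq_mat_invertible 1 (\<lambda>i k. eps ((\<lambda>i k. x) i k))"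
    unfolding sq_mat_invertible_def
    by (rule exI[of _ "\<lambda>_ _. y"]) (simp add: y)
  moreover have "\<And>n M. sq_mat_invertible n (\<lambda>i k. eps (M i k)) \<Longrightarrow> sq_mat_invertible n M"
    using la unfolding local_augmentation_def by blast
  ultimately have "sq_mat_invertible 1 (\<lambda>i k. x)" by simp
  then obtain N where "x * N 0 0 = 1" "N 0 0 * x = 1"
    unfolding sq_mat_invertible_def by auto
  then show ?thesis by (rule UG_I)
qed

lemma E1_unit: "eps x = 1 \<Longrightarrow> x \<in> carrier units_grp"
  by (rule unit_lift) simp

lemma eps_unit: assumes "x \<in> carrier units_grp" shows "eps x \<in> carrier units_grp"
proof (rule UG_I)
  show "eps x * eps (iv x) = 1" "eps (iv x) * eps x = 1"
    using iv_props[OF assms] eps_mult[symmetric] by (metis eps_one)+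
qed

lemma eps_iv: assumes "x \<in> carrier units_grp" shows "eps (iv x) = iv (eps x)"
  by (rule iv_eq[symmetric]) (metis eps_mult eps_one iv_props assms)+

lemma j_unit: assumes "u \<in> carrier units_grp" shows "j u \<in> carrier units_grp"
proof (rule UG_I)
  show "j u * j (iv u) = 1" "j (iv u) * j u = 1"
    using iv_props[OF assms] j_mult[symmetric] by (metis j_one)+
qed

lemma j_iv: assumes "u \<in> carrier units_grp" shows "j (iv u) = iv (j u)"
  by (rule iv_eq[symmetric]) (metis j_mult j_one iv_props assms)+

definition gen :: "('b \<times> 'b) set \<Rightarrow> 'b set" where
  "gen S = generate units_grp {w a b | a b. (a, b) \<in> S}"

lemma C_set_eq: "C_set eps S = {x. eps x = 1} \<inter> gen S"
  unfolding C_set_def gen_def w_def by simp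

lemma gen_props:
  assumes S: "\<And>a b. (a, b) \<in> S \<Longrightarrow> 1 + b * a \<in> carrier units_grp"
  shows "gen S \<subseteq> carrier units_grp" "subgroup (gen S) units_grp"
    "\<And>x y. x \<in> gen S \<Longrightarrow> y \<in> gen S \<Longrightarrow> x * y \<in> gen S"
    "\<And>x. x \<in> gen S \<Longrightarrow> iv x \<in> gen S"
    "\<And>a b. (a, b) \<in> S \<Longrightarrow> w a b \<in> gen S"
    "\<And>a b. (a, b) \<in> S \<Longrightarrow> w b a \<in> gen S"
proof -
  have Xs: "{w a b | a b. (a, b) \<in> S} \<subseteq> carrier units_grp" using S w_unit by blast
  show sg: "subgroup (gen S) units_grp"
    unfolding gen_def by (rule group.generate_is_subgroup[OF UG_group Xs])
  then show "gen S \<subseteq> carrier units_grp" by (rule subgroup.subset)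
  show "\<And>x y. x \<in> gen S \<Longrightarrow> y \<in> gen S \<Longrightarrow> x * y \<in> gen S"
    using subgroup.m_closed[OF sg] by fastforce
  show iv: "\<And>x. x \<in> gen S \<Longrightarrow> iv x \<in> gen S"
    using subgroup.m_inv_closed[OF sg] by fastforce
  show g: "\<And>a b. (a, b) \<in> S \<Longrightarrow> w a b \<in> gen S"
    unfolding gen_def by (rule generate.incl) blast
  show "\<And>a b. (a, b) \<in> S \<Longrightarrow> w b a \<in> gen S"
    using g iv w_inv S by metis
qed

lemma gen_conj:
  assumes S: "\<And>a b. (a, b) \<in> S \<Longrightarrow> 1 + b * a \<in> carrier units_grp"
    and u: "u \<in> carrier units_grp"
    and cl: "\<And>a b. (a, b) \<in> S \<Longrightarrow> (u * a * iv u, u * b * iv u) \<in> S"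
    and x: "x \<in> gen S"
  shows "u * x * iv u \<in> gen S"
proof -
  have Xs: "{w a b | a b. (a, b) \<in> S} \<subseteq> carrier units_grp" using S w_unit by blast
  have "\<And>y. y \<in> {w a b | a b. (a, b) \<in> S} \<Longrightarrow>
      u \<otimes>\<^bsub>units_grp\<^esub> y \<otimes>\<^bsub>units_grp\<^esub> inv\<^bsub>units_grp\<^esub> u \<in> {w a b | a b. (a, b) \<in> S}"
    using w_conj[OF u] S cl by fastforce
  from group.generate_conj_closed[OF UG_group Xs u this] x show ?thesis
    unfolding gen_def by simp
qed

lemma gen_mono: "S \<subseteq> S' \<Longrightarrow> gen S \<subseteq> gen S'"
  unfolding gen_def by (rule group.mono_generate[OF UG_group]) blast

end

context la
begin

abbreviation UB :: "'b set" where "UB \<equiv> carrier (units_grp :: 'b monoid)"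
abbreviation N :: "'b set" where "N \<equiv> gen {(a, b). eps a = 0}"

lemma S1_units: "(a, b) \<in> {(a, b). eps a = 0} \<Longrightarrow> 1 + b * a \<in> UB"
  by (auto intro: E1_unit)

lemmas N_props = gen_props[of "{(a, b). eps a = 0}", OF S1_units]

lemma N_gen: "eps a = 0 \<Longrightarrow> w a b \<in> N"
  using N_props(5) by blast

lemma N_conj: "u \<in> UB \<Longrightarrow> x \<in> N \<Longrightarrow> u * x * iv u \<in> N"
  by (rule gen_conj[OF S1_units]) auto

lemma E1_sub: "subgroup {x. eps x = 1} (units_grp :: 'b monoid)"
proof (rule subgroup.intro)
  show "{x. eps x = 1} \<subseteq> UB" using E1_unit by blast
  show "\<And>x y. x \<in> {x. eps x = 1} \<Longrightarrow> y \<in> {x. eps x = 1} \<Longrightarrow> x \<otimes>\<^bsub>units_grp\<^esub> y \<in> {x. eps x = 1}"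
    by simp
  show "\<one>\<^bsub>units_grp\<^esub> \<in> {x. eps x = 1}" by simp
  show "\<And>x. x \<in> {x. eps x = 1} \<Longrightarrow> inv\<^bsub>units_grp\<^esub> x \<in> {x. eps x = 1}"
    using E1_unit eps_iv by simp
qed

lemma E1_iv: "eps x = 1 \<Longrightarrow> eps (iv x) = 1"
  using E1_unit eps_iv by simp

lemma N_E1: "N \<subseteq> {x. eps x = 1}"
  unfolding gen_def
proof (rule group.generate_subgroup_incl[OF UG_group _ E1_sub])
  show "{w a b |a b. (a, b) \<in> {(a, b). eps a = 0}} \<subseteq> {x. eps x = 1}"
  proof clarify
    fix a b :: 'b assume "eps a = 0"
    then show "eps (w a b) = 1" unfolding w_def
      using eps_iv[OF E1_unit[of "1 + b * a"]] by simp
  qed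
qed

lemma key:
  assumes ab: "1 + b * a \<in> UB"
  shows "w a b * iv (j (eps (w a b))) \<in> N"
proof -
  define a0 where "a0 = j (eps a)"
  define b0 where "b0 = j (eps b)"
  have ea0: "eps a0 = eps a" and eb0: "eps b0 = eps b" by (simp_all add: a0_def b0_def)
  have u1: "1 + b * a0 \<in> UB"
    by (rule unit_lift) (metis eps_unit[OF ab] ea0 eps_add eps_mult eps_one)
  have u2: "1 + a0 * b \<in> UB" using jacobson[OF u1] .
  have u3: "1 + b0 * a0 \<in> UB"
    by (rule unit_lift) (metis eps_unit[OF ab] ea0 eb0 eps_add eps_mult eps_one)
  have u4: "1 + a0 * b0 \<in> UB" using jacobson[OF u3] .
  define c1 where "c1 = iv (1 + a0 * b) * (a - a0)"
  have ec1: "eps c1 = 0" by (simp add: c1_def ea0)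
  have a_eq: "a0 + (1 + a0 * b) * c1 = a" using u2 by (simp add: c1_def)
  have "w a b = (1 + a0 * b) * w c1 b * iv (1 + a0 * b) * w a0 b"
    using w_add[OF u2 u1, of c1] E1_unit ec1 a_eq by simp
  then have "w a b * iv (w a0 b) = (1 + a0 * b) * w c1 b * iv (1 + a0 * b)"
    using w_unit[OF u1] by simp
  then have n1: "w a b * iv (w a0 b) \<in> N" using N_conj[OF u2 N_gen[OF ec1]] by simp
  define c2 where "c2 = iv (1 + b0 * a0) * (b - b0)"
  have ec2: "eps c2 = 0" by (simp add: c2_def eb0)
  have b_eq: "b0 + (1 + b0 * a0) * c2 = b" using u3 by (simp add: c2_def)
  have "w b a0 = (1 + b0 * a0) * w c2 a0 * iv (1 + b0 * a0) * w b0 a0"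
    using w_add[OF u3 u4, of c2] E1_unit ec2 b_eq by simp
  then have "w b a0 * iv (w b0 a0) = (1 + b0 * a0) * w c2 a0 * iv (1 + b0 * a0)"
    using w_unit[OF u4] by simp
  then have n2: "w b a0 * iv (w b0 a0) \<in> N" using N_conj[OF u3 N_gen[OF ec2]] by simp
  define p where "p = w a0 b"
  define q where "q = w a0 b0"
  have pU: "p \<in> UB" unfolding p_def using w_unit[OF u1] .
  have qU: "q \<in> UB" unfolding q_def using w_unit[OF u3] .
  have "w b a0 = iv p" unfolding p_def using w_inv[OF u1] by simp
  moreover have "iv (w b0 a0) = q" unfolding q_def using w_inv[OF u3] w_unit[OF u3] iv_iv
    by metis
  ultimately have "iv p * q \<in> N" using n2 by simp
  then have "iv (iv p * q) \<in> N" using N_props(4) by blast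
  then have "iv q * p \<in> N" using pU qU by (simp add: iv_mult iv_props iv_iv)
  then have "q * (iv q * p) * iv q \<in> N" using N_conj[OF qU] by blast
  then have n3: "p * iv q \<in> N" using qU by simp
  have "w a b * iv p * (p * iv q) \<in> N" using N_props(3) n1 n3 unfolding p_def by blast
  then have n4: "w a b * iv q \<in> N" using pU by (simp add: mult.assoc)
  have "eps (w a b) = eps (1 + a * b) * iv (eps (1 + b * a))"
    unfolding w_def using eps_iv[OF ab] by simp
  then have "j (eps (w a b)) = j (eps (1 + a * b)) * iv (j (eps (1 + b * a)))"
    using j_iv[OF eps_unit[OF ab]] by simp
  also have "\<dots> = q" unfolding q_def w_def a0_def b0_def by simp
  finally show ?thesis using n4 by simp
qed

end

context la
begin

lemma jeps_unit: "u \<in> UB \<Longrightarrow> j (eps u) \<in> UB"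
  using j_unit eps_unit by blast

lemma M_sub: "subgroup {u \<in> UB. u * iv (j (eps u)) \<in> N} (units_grp :: 'b monoid)"
proof (rule subgroup.intro)
  show "{u \<in> UB. u * iv (j (eps u)) \<in> N} \<subseteq> UB" by blast
  show "\<one>\<^bsub>units_grp\<^esub> \<in> {u \<in> UB. u * iv (j (eps u)) \<in> N}"
    using subgroup.one_closed[OF N_props(2)] by simp
next
  fix u v assume u: "u \<in> {u \<in> UB. u * iv (j (eps u)) \<in> N}" and v: "v \<in> {u \<in> UB. u * iv (j (eps u)) \<in> N}"
  let ?ju = "j (eps u)" and ?jv = "j (eps v)"
  have uU: "u \<in> UB" and vU: "v \<in> UB" and ju: "?ju \<in> UB" and jv: "?jv \<in> UB"
    using u v jeps_unit by auto
  have "u * iv ?ju * (?ju * (v * iv ?jv) * iv ?ju) \<in> N"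
    using u v N_conj[OF ju] N_props(3) by blast
  moreover have "u * iv ?ju * (?ju * (v * iv ?jv) * iv ?ju) = u * v * iv (j (eps (u * v)))"
    using ju jv by (simp add: iv_mult mult.assoc)
  ultimately show "u \<otimes>\<^bsub>units_grp\<^esub> v \<in> {u \<in> UB. u * iv (j (eps u)) \<in> N}"
    using UG_mult_closed[OF uU vU] by simp
next
  fix u assume u: "u \<in> {u \<in> UB. u * iv (j (eps u)) \<in> N}"
  let ?ju = "j (eps u)"
  have uU: "u \<in> UB" and ju: "?ju \<in> UB" and n: "u * iv ?ju \<in> N" using u jeps_unit by auto
  have "iv (u * iv ?ju) \<in> N" using n N_props(4) by blast
  then have "iv ?ju * iv (u * iv ?ju) * iv (iv ?ju) \<in> N"
    using N_conj[OF iv_props(3)[OF ju]] by blast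
  moreover have "iv ?ju * iv (u * iv ?ju) * iv (iv ?ju) = iv u * iv (j (eps (iv u)))"
    using uU ju by (simp add: iv_mult iv_iv iv_props eps_iv j_iv eps_unit mult.assoc)
  ultimately show "inv\<^bsub>units_grp\<^esub> u \<in> {u \<in> UB. u * iv (j (eps u)) \<in> N}"
    using iv_props(3)[OF uU] by simp
qed

lemma C4_sub: "{x. eps x = 1} \<inter> gen {(a, b). 1 + b * a \<in> UB} \<subseteq> N"
proof -
  have "{w a b |a b. (a, b) \<in> {(a, b). 1 + b * a \<in> UB}} \<subseteq> {u \<in> UB. u * iv (j (eps u)) \<in> N}"
    using key w_unit by blast
  then have "gen {(a, b). 1 + b * a \<in> UB} \<subseteq> {u \<in> UB. u * iv (j (eps u)) \<in> N}"
    unfolding gen_def[of "{(a, b). 1 + b * a \<in> UB}"]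
    by (rule group.generate_subgroup_incl[OF UG_group _ M_sub])
  then show ?thesis by auto
qed

lemma chain:
  "C_set eps {(a, b). eps a = 0} = N"
  "C_set eps {(a, b). eps (a * b) = 0 \<and> eps (b * a) = 0} = N"
  "C_set eps {(a, b). eps (b * a) = 0} = N"
  "C_set eps {(a, b). 1 + b * a \<in> UB} = N"
proof -
  have s1: "gen {(a, b). eps a = 0} \<subseteq> gen {(a, b). eps (a * b) = 0 \<and> eps (b * a) = 0}"
    by (rule gen_mono) auto
  have s2: "gen {(a, b). eps (a * b) = 0 \<and> eps (b * a) = 0} \<subseteq> gen {(a, b). eps (b * a) = 0}"
    by (rule gen_mono) auto
  have s3: "gen {(a, b). eps (b * a) = 0} \<subseteq> gen {(a, b). 1 + b * a \<in> UB}"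
    by (rule gen_mono) (auto intro: E1_unit)
  show "C_set eps {(a, b). eps a = 0} = N"
    "C_set eps {(a, b). eps (a * b) = 0 \<and> eps (b * a) = 0} = N"
    "C_set eps {(a, b). eps (b * a) = 0} = N"
    "C_set eps {(a, b). 1 + b * a \<in> UB} = N"
    unfolding C_set_eq using s1 s2 s3 C4_sub N_E1 by blast+
qed

lemma derived_U: "derived units_grp UB = gen {(a, b). b \<in> UB \<and> 1 + b * a \<in> UB}"
proof -
  have A: "derived_set units_grp UB \<subseteq> {w a b |a b. (a, b) \<in> {(a, b). b \<in> UB \<and> 1 + b * a \<in> UB}}"
  proof clarify
    fix u v assume u: "u \<in> UB" and v: "v \<in> UB"
    have "u * v * iv u * iv v = w (u * (v - 1)) (iv u)" using commutator_w[OF u v] .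
    moreover have "1 + iv u * (u * (v - 1)) = v" using u by simp
    ultimately show "\<exists>a b. u \<otimes>\<^bsub>units_grp\<^esub> v \<otimes>\<^bsub>units_grp\<^esub> inv\<^bsub>units_grp\<^esub> u \<otimes>\<^bsub>units_grp\<^esub> inv\<^bsub>units_grp\<^esub> v = w a b \<and>
        (a, b) \<in> {(a, b). b \<in> UB \<and> 1 + b * a \<in> UB}"
      using iv_props(3)[OF u] v by (intro exI[of _ "u * (v - 1)"] exI[of _ "iv u"]) simp
  qed
  have B: "{w a b |a b. (a, b) \<in> {(a, b). b \<in> UB \<and> 1 + b * a \<in> UB}} \<subseteq> derived_set units_grp UB"
  proof clarify
    fix a b assume b: "b \<in> UB" and ab: "1 + b * a \<in> UB"
    show "w a b \<in> derived_set units_grp UB"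
      using w_commutator[OF b ab] iv_props(3)[OF b] ab by fastforce
  qed
  show ?thesis unfolding derived_def gen_def
    using group.mono_generate[OF UG_group A] group.mono_generate[OF UG_group B] by blast
qed

end

context la
begin

abbreviation E1 :: "'b set" where "E1 \<equiv> {x. eps x = 1}"

lemma E1_normal: "E1 \<lhd> (units_grp :: 'b monoid)"
proof -
  have "\<forall>x\<in>UB. \<forall>h\<in>E1. x \<otimes>\<^bsub>units_grp\<^esub> h \<otimes>\<^bsub>units_grp\<^esub> inv\<^bsub>units_grp\<^esub> x \<in> E1"
    using eps_iv iv_props(1)[OF eps_unit] by simp
  then show ?thesis using group.normal_inv_iff[OF UG_group] E1_sub by blast
qed

abbreviation D :: "'b set" where "D \<equiv> derived units_grp E1"

lemma D_sub: "subgroup D (units_grp :: 'b monoid)"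
  using group.derived_is_subgroup[OF UG_group] E1_sub subgroup.subset by blast

lemma D_E1: "D \<subseteq> E1"
  using group.derived_incl[OF UG_group _ E1_sub] by blast

lemma D_mult: "x \<in> D \<Longrightarrow> y \<in> D \<Longrightarrow> x * y \<in> D"
  using subgroup.m_closed[OF D_sub] by fastforce

lemma D_iv: "x \<in> D \<Longrightarrow> iv x \<in> D"
  using subgroup.m_inv_closed[OF D_sub] by fastforce

lemma D_conj: "u \<in> UB \<Longrightarrow> x \<in> D \<Longrightarrow> u * x * iv u \<in> D"
  using normal.inv_op_closed2[OF group.derived_is_normal[OF UG_group E1_normal]] by fastforce

lemma D1: assumes c: "eps c = 0" and b: "eps b = 1" shows "w c b \<in> D"
proof -
  have bU: "b \<in> UB" using E1_unit b by blast
  have bc: "1 + b * c \<in> UB" using E1_unit c by simp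
  have h1: "iv b \<in> E1" using E1_iv[OF b] by simp
  have h2: "1 + b * c \<in> E1" using c by simp
  have "iv b * (1 + b * c) * iv (iv b) * iv (1 + b * c) \<in> derived_set units_grp E1"
    by (rule UN_I[OF h1], rule UN_I[OF h2]) simp
  then show ?thesis unfolding w_commutator[OF bU bc] derived_def by (rule generate.incl)
qed

lemma D2: assumes a: "eps a = 0" and c: "eps c = 0" shows "w a c \<in> D"
proof -
  have "w (1 + (1 + 1 * c) * a) c = (1 + 1 * c) * w a c * iv (1 + 1 * c) * w 1 c"
    by (rule w_add) (use E1_unit a c in simp_all)
  moreover have "w 1 c = 1" by (rule w_comm) (use E1_unit c in simp_all)
  ultimately have e: "w (1 + (1 + c) * a) c = (1 + c) * w a c * iv (1 + c)" by simp
  have "iv (w c (1 + (1 + c) * a)) \<in> D"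
    using D_iv D1[OF c, of "1 + (1 + c) * a"] a by simp
  moreover have "iv (w c (1 + (1 + c) * a)) = w (1 + (1 + c) * a) c"
    by (rule w_inv) (use E1_unit a c in simp)
  ultimately have "(1 + c) * w a c * iv (1 + c) \<in> D" using e by simp
  moreover have cU: "1 + c \<in> UB" using E1_unit c by simp
  ultimately have "iv (1 + c) * ((1 + c) * w a c * iv (1 + c)) * iv (iv (1 + c)) \<in> D"
    using D_conj[OF iv_props(3)[OF cU]] by blast
  then show ?thesis using cU by (simp add: iv_iv mult.assoc iv_props)
qed

context
  fixes \<zeta> :: 'a
  assumes hz: "\<forall>x. eps x = 0 \<longrightarrow> j \<zeta> * x = x * j \<zeta>"
begin

abbreviation S6 :: "('b \<times> 'b) set" where "S6 \<equiv> {(a, b). eps a = 0 \<and> eps b = \<zeta>}"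
abbreviation T :: "'b set" where "T \<equiv> gen S6"

lemma S6_units: "(a, b) \<in> S6 \<Longrightarrow> 1 + b * a \<in> UB"
  by (auto intro: E1_unit)

lemmas T_props = gen_props[of S6, OF S6_units]

lemma T_conj: "eps u = 1 \<Longrightarrow> x \<in> T \<Longrightarrow> u * x * iv u \<in> T"
  by (rule gen_conj[OF S6_units]) (auto simp: E1_unit E1_iv)

lemma zw: assumes a: "eps a = 0" and c: "eps c = 0"
  shows "w (j \<zeta> + (1 + j \<zeta> * a) * c) a = (1 + j \<zeta> * a) * w c a * iv (1 + j \<zeta> * a)"
proof -
  have "w (j \<zeta> + (1 + j \<zeta> * a) * c) a = (1 + j \<zeta> * a) * w c a * iv (1 + j \<zeta> * a) * w (j \<zeta>) a"
    by (rule w_add) (use E1_unit a c in simp_all)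
  moreover have "w (j \<zeta>) a = 1" by (rule w_comm) (use E1_unit a hz in simp_all)
  ultimately show ?thesis by simp
qed

lemma T1: assumes a: "eps a = 0" and c: "eps c = 0" shows "w c a \<in> T"
proof -
  let ?z = "j \<zeta>"
  let ?b = "?z + (1 + ?z * a) * c"
  have "w ?b a \<in> T" using T_props(6)[of a ?b] a c by simp
  then have "iv (1 + ?z * a) * w ?b a * iv (iv (1 + ?z * a)) \<in> T"
    using T_conj E1_iv a by simp
  moreover have zU: "1 + ?z * a \<in> UB" using E1_unit a by simp
  ultimately show ?thesis unfolding zw[OF a c] by (simp add: iv_iv mult.assoc iv_props)
qed

lemma T2: assumes b: "eps b = 1" and a: "eps a = 0" shows "w b a \<in> T"
proof -
  define c where "c = iv (1 + a) * (b - 1)"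
  have ec: "eps c = 0" using b a E1_iv by (simp add: c_def)
  have beq: "1 + (1 + 1 * a) * c = b" using E1_unit a by (simp add: c_def)
  have "w (1 + (1 + 1 * a) * c) a = (1 + 1 * a) * w c a * iv (1 + 1 * a) * w 1 a"
    by (rule w_add) (use E1_unit a ec in simp_all)
  moreover have "w 1 a = 1" by (rule w_comm) (use E1_unit a in simp_all)
  ultimately have "w b a = (1 + a) * w c a * iv (1 + a)" using beq by simp
  then show ?thesis using T_conj[OF _ T1[OF a ec], of "1 + a"] a by simp
qed

lemma D_T: "D \<subseteq> T"
proof -
  have "derived_set units_grp E1 \<subseteq> T"
  proof
    fix x assume "x \<in> derived_set units_grp E1"
    then obtain u v where u: "u \<in> E1" and v: "v \<in> E1" and x: "x = u * v * iv u * iv v"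
      by auto
    have uU: "u \<in> UB" and vU: "v \<in> UB" using u v E1_unit by auto
    have e: "u * v * iv u * iv v = w (u * (v - 1)) (iv u)" using commutator_w[OF uU vU] .
    have "w (u * (v - 1)) (iv u) = iv (w (iv u) (u * (v - 1)))"
      using w_inv[of "u * (v - 1)" "iv u"] jacobson[of "iv u" "u * (v - 1)"] vU uU by simp
    moreover have "w (iv u) (u * (v - 1)) \<in> T" using T2 E1_iv u v by simp
    ultimately show "x \<in> T" using e x T_props(4) by simp
  qed
  then show ?thesis unfolding derived_def
    by (rule group.generate_subgroup_incl[OF UG_group _ T_props(2)])
qed

lemma D3: assumes a: "eps a = 0" and b: "eps b = \<zeta>" shows "w a b \<in> D"
proof -
  let ?z = "j \<zeta>"
  define c where "c = iv (1 + ?z * a) * (b - ?z)"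
  have ec: "eps c = 0" using b by (simp add: c_def)
  have beq: "?z + (1 + ?z * a) * c = b" using E1_unit a by (simp add: c_def)
  have "w b a = (1 + ?z * a) * w c a * iv (1 + ?z * a)" using zw[OF a ec] beq by simp
  then have "w b a \<in> D" using D_conj[OF _ D2[OF ec a], of "1 + ?z * a"] E1_unit a by simp
  then have "iv (w b a) \<in> D" by (rule D_iv)
  moreover have "iv (w b a) = w a b" by (rule w_inv) (use E1_unit a b in simp)
  ultimately show ?thesis by simp
qed

lemma T_D: "T \<subseteq> D"
  unfolding gen_def
  by (rule group.generate_subgroup_incl[OF UG_group _ D_sub]) (use D3 in blast)

lemma zeta_part: "D = C_set eps S6"
  unfolding C_set_eq using D_T T_D D_E1 by blast

end

end

context la
begin

abbreviation G' :: "'b monoid" where "G' \<equiv> (units_grp :: 'b monoid)\<lparr>carrier := E1\<rparr>"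

lemma G'_group: "group G'"
  using group.subgroup_imp_group[OF UG_group E1_sub] .

lemma N_normal': "N \<lhd> G'"
proof -
  have sub: "subgroup N G'" using group.subgroup_incl[OF UG_group N_props(2) E1_sub N_E1] .
  have "\<forall>x\<in>carrier G'. \<forall>h\<in>N. x \<otimes>\<^bsub>G'\<^esub> h \<otimes>\<^bsub>G'\<^esub> inv\<^bsub>G'\<^esub> x \<in> N"
  proof (intro ballI)
    fix x h assume x: "x \<in> carrier G'" and h: "h \<in> N"
    have xE: "x \<in> E1" using x by simp
    have "inv\<^bsub>G'\<^esub> x = iv x" using group.m_inv_consistent[OF UG_group E1_sub xE] .
    then show "x \<otimes>\<^bsub>G'\<^esub> h \<otimes>\<^bsub>G'\<^esub> inv\<^bsub>G'\<^esub> x \<in> N"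
      using N_conj[OF E1_unit[of x] h] xE by simp
  qed
  then show ?thesis using group.normal_inv_iff[OF G'_group] sub by blast
qed

lemma comm_quot: "comm_group (G' Mod N)"
proof (rule group.group_comm_groupI[OF normal.factorgroup_is_group[OF N_normal']])
  fix XX YY assume XX: "XX \<in> carrier (G' Mod N)" and YY: "YY \<in> carrier (G' Mod N)"
  obtain g1 where g1: "g1 \<in> E1" "XX = N #>\<^bsub>G'\<^esub> g1"
    using XX unfolding FactGroup_def RCOSETS_def by auto
  obtain g2 where g2: "g2 \<in> E1" "YY = N #>\<^bsub>G'\<^esub> g2"
    using YY unfolding FactGroup_def RCOSETS_def by auto
  have XY: "XX \<otimes>\<^bsub>G' Mod N\<^esub> YY = N #>\<^bsub>G'\<^esub> (g1 * g2)"
    using normal.rcos_sum[OF N_normal', of g1 g2] g1 g2 by (simp add: FactGroup_def)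
  have YX: "YY \<otimes>\<^bsub>G' Mod N\<^esub> XX = N #>\<^bsub>G'\<^esub> (g2 * g1)"
    using normal.rcos_sum[OF N_normal', of g2 g1] g1 g2 by (simp add: FactGroup_def)
  have u1: "g1 \<in> UB" and u2: "g2 \<in> UB" using g1 g2 E1_unit by auto
  let ?h = "g2 * g1 * iv g2 * iv g1"
  have hN: "?h \<in> N"
    unfolding commutator_w[OF u2 u1] by (rule N_gen) (use g1 g2 in simp)
  have "?h * (g1 * g2) = g2 * g1" using u1 u2 by (simp add: mult.assoc iv_props)
  then have "g2 * g1 \<in> N #>\<^bsub>G'\<^esub> (g1 * g2)"
    unfolding r_coset_def using hN by force
  then have "N #>\<^bsub>G'\<^esub> (g1 * g2) = N #>\<^bsub>G'\<^esub> (g2 * g1)"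
    using group.repr_independence[OF G'_group] g1 g2 normal_imp_subgroup[OF N_normal'] by simp
  then show "XX \<otimes>\<^bsub>G' Mod N\<^esub> YY = YY \<otimes>\<^bsub>G' Mod N\<^esub> XX" using XY YX by simp
qed

end

theorem proposition3p4:
  fixes eps :: "'b::ring_1 \<Rightarrow> 'a::ring_1" and j :: "'a \<Rightarrow> 'b"
  assumes "local_augmentation eps j"
  defines "E1 \<equiv> {x. eps x = 1}"
  defines "C \<equiv> C_set eps {(a, b). eps (a * b) = 0 \<and> eps (b * a) = 0}"
  shows
    "C_set eps {(a, b). eps a = 0} = C \<and>
     C = C_set eps {(a, b). eps (b * a) = 0} \<and>
     C_set eps {(a, b). eps (b * a) = 0} = C_set eps {(a, b). 1 + b * a \<in> carrier units_grp} \<and>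
     derived units_grp (carrier units_grp) \<inter> E1 =
       C_set eps {(a, b). b \<in> carrier units_grp \<and> 1 + b * a \<in> carrier units_grp} \<and>
     (\<forall>\<zeta>. (\<forall>x. eps x = 0 \<longrightarrow> j \<zeta> * x = x * j \<zeta>) \<longrightarrow>
       derived units_grp E1 = C_set eps {(a, b). eps a = 0 \<and> eps b = \<zeta>}) \<and>
     derived units_grp E1 \<subseteq> derived units_grp (carrier units_grp) \<inter> E1 \<and>
     derived units_grp (carrier units_grp) \<inter> E1 \<subseteq> C \<and>
     C \<lhd> (units_grp\<lparr>carrier := E1\<rparr>) \<and> comm_group ((units_grp\<lparr>carrier := E1\<rparr>) Mod C)"
proof -
  interpret la eps j using assms(1) by (rule la.intro)
  have c5: "C_set eps {(a, b). b \<in> carrier units_grp \<and> 1 + b * a \<in> carrier units_grp}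
      = derived units_grp (carrier units_grp) \<inter> {x. eps x = 1}"
    unfolding C_set_eq derived_U by blast
  have c54: "C_set eps {(a, b). b \<in> carrier units_grp \<and> 1 + b * a \<in> carrier units_grp}
      \<subseteq> C_set eps {(a, b). 1 + b * a \<in> carrier units_grp}"
    unfolding C_set_eq using gen_mono[of "{(a, b). b \<in> carrier units_grp \<and> 1 + b * a \<in> carrier units_grp}"
        "{(a, b). 1 + b * a \<in> carrier units_grp}"] by blast
  have d: "derived units_grp {x. eps x = 1} \<subseteq> derived units_grp (carrier units_grp)"
    using group.mono_derived[OF UG_group, of "{x. eps x = 1}" "carrier units_grp"] E1_unit by blast
  show ?thesis
    unfolding E1_def C_def
    using chain c5 c54 d D_E1 zeta_part N_normal' comm_quot by auto
qed

end
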